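(* Let $(X\cup Y,\mathbf{d})$ be a finite metric space and let $\epsilon \in (0,\frac{1}{2})$. For every $x\in X$ let $N_x$ be an $\epsilon \cdot \mathbf{d}(x,Y)$-net of $B_Y(\pi_Y(x), \mathbf{d}(x,Y)/\epsilon)$ with $\pi_Y(x)\in N_x$. For all $x\in X$ and $y\in Y$ define $\widehat{\mathbf{d}}(x,y) = \min_{u\in N_x} \mathbf{d}(x,u) + \mathbf{d}(u,y)$. Then for all $x\in X$ and $y\in Y$, \[ \mathbf{d}(x,y) \le \widehat{\mathbf{d}}(x,y) \le (1+4 \epsilon) \cdot \mathbf{d}(x,y). \]
   Context: For $S\subseteq X\cup Y$, $x\in X\cup Y$ and $r>0$, $B_S(x,r)=\{y\in S:\mathbf{d}(x,y)\le r\}$. $\pi_S(x)$ denotes a point of $S$ closest to $x$, and $\mathbf{d}(x,S)=\mathbf{d}(x,\pi_S(x))$. For $\rho>0$, a $\rho$-net of a set $B$ is a subset $N\subseteq B$ such that any two distinct points of $N$ are at distance at least $\rho$ and every point of $B$ is within distance $\rho$ of some point of $N$. *)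

theory Defs
  imports "HOL-Analysis.Analysis"
begin

definition ball_in :: "'a::metric_space set \<Rightarrow> 'a \<Rightarrow> real \<Rightarrow> 'a set" where
  "ball_in S x r = {y \<in> S. dist x y \<le> r}"

definition is_net :: "real \<Rightarrow> 'a::metric_space set \<Rightarrow> 'a set \<Rightarrow> bool" where
  "is_net \<rho> B N \<longleftrightarrow> N \<subseteq> B \<and>
     (\<forall>a\<in>N. \<forall>b\<in>N. a \<noteq> b \<longrightarrow> \<rho> \<le> dist a b) \<and>
     (\<forall>b\<in>B. \<exists>a\<in>N. dist b a \<le> \<rho>)"

definition closest_in :: "'a::metric_space set \<Rightarrow> 'a \<Rightarrow> 'a \<Rightarrow> bool" where
  "closest_in S x c \<longleftrightarrow> c \<in> S \<and> (\<forall>y\<in>S. dist x c \<le> dist x y)"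

end

theory Submission
  imports Defs
begin

theorem lemma1p6:
  fixes X Y :: "'a::metric_space set" and \<epsilon> :: real
    and \<pi> :: "'a \<Rightarrow> 'a" and N :: "'a \<Rightarrow> 'a set"
    and dhat :: "'a \<Rightarrow> 'a \<Rightarrow> real"
  assumes "finite X" and "finite Y" and "Y \<noteq> {}"
    and "0 < \<epsilon>" and "\<epsilon> < 1/2"
    and "\<forall>x\<in>X. closest_in Y x (\<pi> x)"
    and "\<forall>x\<in>X. is_net (\<epsilon> * dist x (\<pi> x)) (ball_in Y (\<pi> x) (dist x (\<pi> x) / \<epsilon>)) (N x)
                 \<and> \<pi> x \<in> N x"
    and "\<forall>x\<in>X. \<forall>y\<in>Y. dhat x y = Min ((\<lambda>u. dist x u + dist u y) ` N x)"
  shows "\<forall>x\<in>X. \<forall>y\<in>Y. dist x y \<le> dhat x y \<and> dhat x y \<le> (1 + 4 * \<epsilon>) * dist x y"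
proof (intro ballI)
  fix x y assume x: "x \<in> X" and y: "y \<in> Y"
  define D where "D = dist x (\<pi> x)"
  have cl: "\<pi> x \<in> Y" "\<forall>z\<in>Y. D \<le> dist x z"
    using assms(6) x unfolding closest_in_def D_def by auto
  have net: "N x \<subseteq> ball_in Y (\<pi> x) (D / \<epsilon>)"
    "\<forall>b\<in>ball_in Y (\<pi> x) (D / \<epsilon>). \<exists>a\<in>N x. dist b a \<le> \<epsilon> * D"
    "\<pi> x \<in> N x"
    using assms(7) x unfolding is_net_def D_def by auto
  have NY: "N x \<subseteq> Y" using net(1) unfolding ball_in_def by auto
  have fin: "finite (N x)" using NY assms(2) finite_subset by blast
  have dh: "dhat x y = Min ((\<lambda>u. dist x u + dist u y) ` N x)" using assms(8) x y by auto
  have Dle: "D \<le> dist x y" using cl y by auto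
  have D0: "0 \<le> D" unfolding D_def by simp
  have le: "dhat x y \<le> dist x u + dist u y" if "u \<in> N x" for u
    unfolding dh using fin that by (intro Min_le) auto
  have "dist x y \<le> dhat x y"
  proof -
    have "dhat x y \<in> (\<lambda>u. dist x u + dist u y) ` N x"
      unfolding dh using fin net(3) by (intro Min_in) auto
    then obtain u where "dhat x y = dist x u + dist u y" by auto
    then show ?thesis using dist_triangle[of x y u] by simp
  qed
  moreover have "dhat x y \<le> (1 + 4 * \<epsilon>) * dist x y"
  proof (cases "dist (\<pi> x) y \<le> D / \<epsilon>")
    case True
    then have "y \<in> ball_in Y (\<pi> x) (D / \<epsilon>)" using y unfolding ball_in_def by auto
    then obtain u where u: "u \<in> N x" "dist y u \<le> \<epsilon> * D" using net(2) by blast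
    have "dhat x y \<le> dist x u + dist u y" using le u by auto
    also have "\<dots> \<le> dist x y + 2 * dist u y"
      using dist_triangle[of x u y] dist_commute[of y u] by linarith
    also have "\<dots> \<le> dist x y + 2 * (\<epsilon> * D)" using u by (simp add: dist_commute)
    also have "\<dots> \<le> dist x y + 4 * \<epsilon> * dist x y"
      using Dle assms(4) D0 by (simp add: mult_left_mono)
    finally show ?thesis by (simp add: algebra_simps)
  next
    case False
    then have "D / \<epsilon> < dist (\<pi> x) y" by simp
    then have a: "D < \<epsilon> * dist (\<pi> x) y" using assms(4) by (simp add: field_simps)
    have b: "dist (\<pi> x) y \<le> D + dist x y"
      using dist_triangle[of "\<pi> x" y x] unfolding D_def by (simp add: dist_commute)
    have "\<epsilon> * dist (\<pi> x) y \<le> \<epsilon> * (D + dist x y)"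
      using b assms(4) by (intro mult_left_mono) auto
    then have "D < \<epsilon> * (D + dist x y)" using a by linarith
    then have d1: "D * (1 - \<epsilon>) < \<epsilon> * dist x y" by (simp add: algebra_simps)
    have d2: "D * (1/2) \<le> D * (1 - \<epsilon>)" using assms(5) D0 by (intro mult_left_mono) auto
    have c: "D \<le> 2 * \<epsilon> * dist x y" using d1 d2 by linarith
    have "dhat x y \<le> D + dist (\<pi> x) y" using le net(3) unfolding D_def by auto
    also have "\<dots> \<le> 2 * D + dist x y" using b by simp
    finally show ?thesis using c by (simp add: algebra_simps)
  qed
  ultimately show "dist x y \<le> dhat x y \<and> dhat x y \<le> (1 + 4 * \<epsilon>) * dist x y" by simp
qed

end
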